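(* Let $(G,k)$ be an instance and let $v\in V$ satisfy $|N(v)|>7k$ and $\rho(v)> \frac{|N(v)|(|N(v)|-1)}{4}$. Then for every feasible solution $X$ with $v\notin X$, the connected component of $G-X$ containing $v$ is a clique.
   Context: Graphs are undirected, without self-loops, possibly with multi-edges. $N(v)$ is the set of vertices adjacent to $v$; $\rho(v)$ is the number of unordered pairs $\{u_1,u_2\}\subseteq N(v)$ joined by at least one edge (parallel edges counted once). A vertex set induces a clique if between any two distinct vertices of it there is exactly one edge, and a tree if it is connected and has no cycle (two parallel edges form a cycle). For an integer $k\ge1$, a feasible solution is a set $X\subseteq V$ with $|X|\le k$ such that every connected component of $G-X$ is a clique or a tree. *)

theory Defs
  imports Complex_Main
begin

definition multigraph :: "'a set \<Rightarrow> ('a \<Rightarrow> 'a \<Rightarrow> nat) \<Rightarrow> bool" where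
  "multigraph V m \<longleftrightarrow> finite V \<and> (\<forall>x y. m x y = m y x) \<and> (\<forall>x. m x x = 0)
     \<and> (\<forall>x y. m x y > 0 \<longrightarrow> x \<in> V \<and> y \<in> V)"

definition nbrs :: "'a set \<Rightarrow> ('a \<Rightarrow> 'a \<Rightarrow> nat) \<Rightarrow> 'a \<Rightarrow> 'a set" where
  "nbrs V m v = {u \<in> V. m v u > 0}"

definition rho :: "'a set \<Rightarrow> ('a \<Rightarrow> 'a \<Rightarrow> nat) \<Rightarrow> 'a \<Rightarrow> nat" where
  "rho V m v = card {{u1, u2} | u1 u2. u1 \<in> nbrs V m v \<and> u2 \<in> nbrs V m v \<and> u1 \<noteq> u2 \<and> m u1 u2 > 0}"

definition is_clique :: "('a \<Rightarrow> 'a \<Rightarrow> nat) \<Rightarrow> 'a set \<Rightarrow> bool" where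
  "is_clique m S \<longleftrightarrow> (\<forall>x\<in>S. \<forall>y\<in>S. x \<noteq> y \<longrightarrow> m x y = 1)"

definition adj_in :: "('a \<Rightarrow> 'a \<Rightarrow> nat) \<Rightarrow> 'a set \<Rightarrow> 'a \<Rightarrow> 'a \<Rightarrow> bool" where
  "adj_in m S x y \<longleftrightarrow> x \<in> S \<and> y \<in> S \<and> m x y > 0"

definition connected_in :: "('a \<Rightarrow> 'a \<Rightarrow> nat) \<Rightarrow> 'a set \<Rightarrow> bool" where
  "connected_in m S \<longleftrightarrow> S \<noteq> {} \<and> (\<forall>x\<in>S. \<forall>y\<in>S. (adj_in m S)\<^sup>*\<^sup>* x y)"

definition has_cycle_in :: "('a \<Rightarrow> 'a \<Rightarrow> nat) \<Rightarrow> 'a set \<Rightarrow> bool" where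
  "has_cycle_in m S \<longleftrightarrow>
     (\<exists>x\<in>S. \<exists>y\<in>S. m x y \<ge> 2) \<or>
     (\<exists>xs. length xs \<ge> 3 \<and> distinct xs \<and> set xs \<subseteq> S \<and>
          (\<forall>i < length xs. m (xs ! i) (xs ! ((i + 1) mod length xs)) > 0))"

definition is_tree :: "('a \<Rightarrow> 'a \<Rightarrow> nat) \<Rightarrow> 'a set \<Rightarrow> bool" where
  "is_tree m S \<longleftrightarrow> connected_in m S \<and> \<not> has_cycle_in m S"

definition component :: "('a \<Rightarrow> 'a \<Rightarrow> nat) \<Rightarrow> 'a set \<Rightarrow> 'a \<Rightarrow> 'a set" where
  "component m S v = {u \<in> S. (adj_in m S)\<^sup>*\<^sup>* v u}"

definition feasible :: "'a set \<Rightarrow> ('a \<Rightarrow> 'a \<Rightarrow> nat) \<Rightarrow> nat \<Rightarrow> 'a set \<Rightarrow> bool" where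
  "feasible V m k X \<longleftrightarrow> X \<subseteq> V \<and> card X \<le> k \<and>
     (\<forall>w \<in> V - X. is_clique m (component m (V - X) w) \<or> is_tree m (component m (V - X) w))"

end

theory Submission
  imports Defs
begin

theorem mainTheorem4:
  fixes V :: "'a set" and m :: "'a \<Rightarrow> 'a \<Rightarrow> nat" and k :: nat and v :: 'a and X :: "'a set"
  assumes "multigraph V m" and "k \<ge> 1" and "v \<in> V"
    and "card (nbrs V m v) > 7 * k"
    and "real (rho V m v) > real (card (nbrs V m v)) * (real (card (nbrs V m v)) - 1) / 4"
    and "feasible V m k X" and "v \<notin> X"
  shows "is_clique m (component m (V - X) v)"
proof (rule ccontr)
  assume nc: "\<not> is_clique m (component m (V - X) v)"
  define N where "N = nbrs V m v"
  define d where "d = card N"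
  have mg: "finite V" "\<And>x y. m x y = m y x" "\<And>x. m x x = 0"
    using assms(1) unfolding multigraph_def by auto
  have finN: "finite N" using mg(1) unfolding N_def nbrs_def by auto
  have XV: "X \<subseteq> V" and cX: "card X \<le> k" using assms(6) unfolding feasible_def by auto
  have tree: "is_tree m (component m (V - X) v)"
    using assms(6) assms(3) assms(7) nc unfolding feasible_def by auto
  have nocyc: "\<not> has_cycle_in m (component m (V - X) v)"
    using tree unfolding is_tree_def by auto
  have noedge: "\<not> (m u1 u2 > 0)" if "u1 \<in> N - X" "u2 \<in> N - X" "u1 \<noteq> u2" for u1 u2
  proof
    assume e: "m u1 u2 > 0"
    have vu1: "m v u1 > 0" "u1 \<in> V" using that(1) unfolding N_def nbrs_def by auto
    have vu2: "m v u2 > 0" "u2 \<in> V" using that(2) unfolding N_def nbrs_def by auto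
    have "u1 \<noteq> v" "u2 \<noteq> v" using vu1 vu2 mg(3) by auto
    have inC: "v \<in> component m (V - X) v" using assms(3,7) unfolding component_def by auto
    have "adj_in m (V - X) v u1" using vu1 that(1) assms(3,7) unfolding adj_in_def by auto
    hence c1: "u1 \<in> component m (V - X) v" using vu1 that(1) unfolding component_def by auto
    have "adj_in m (V - X) v u2" using vu2 that(2) assms(3,7) unfolding adj_in_def by auto
    hence c2: "u2 \<in> component m (V - X) v" using vu2 that(2) unfolding component_def by auto
    let ?xs = "[v, u1, u2]"
    have "\<forall>i < length ?xs. m (?xs ! i) (?xs ! ((i + 1) mod length ?xs)) > 0"
    proof (intro allI impI)
      fix i assume "i < length ?xs"
      hence "i = 0 \<or> i = 1 \<or> i = 2" by auto
      thus "m (?xs ! i) (?xs ! ((i + 1) mod length ?xs)) > 0"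
        using vu1 vu2 e mg(2)[of u2 v] by auto
    qed
    moreover have "distinct ?xs" using \<open>u1 \<noteq> v\<close> \<open>u2 \<noteq> v\<close> that(3) by auto
    moreover have "set ?xs \<subseteq> component m (V - X) v" using inC c1 c2 by auto
    ultimately have "has_cycle_in m (component m (V - X) v)"
      unfolding has_cycle_in_def by (metis length_Cons list.size(3) numeral_3_eq_3 order_refl)
    thus False using nocyc by simp
  qed
  define P where "P = {{u1, u2} | u1 u2. u1 \<in> N \<and> u2 \<in> N \<and> u1 \<noteq> u2 \<and> m u1 u2 > 0}"
  have rhoP: "rho V m v = card P" unfolding rho_def P_def N_def by simp
  have sub: "P \<subseteq> (\<Union>x\<in>X \<inter> N. (\<lambda>u. {x, u}) ` (N - {x}))"
  proof
    fix p assume "p \<in> P"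
    then obtain u1 u2 where p: "p = {u1,u2}" "u1 \<in> N" "u2 \<in> N" "u1 \<noteq> u2" "m u1 u2 > 0"
      unfolding P_def by auto
    have "u1 \<in> X \<or> u2 \<in> X" using noedge[of u1 u2] p by auto
    thus "p \<in> (\<Union>x\<in>X \<inter> N. (\<lambda>u. {x, u}) ` (N - {x}))"
    proof
      assume "u1 \<in> X" thus ?thesis using p by auto
    next
      assume "u2 \<in> X" thus ?thesis using p by (auto simp: insert_commute)
    qed
  qed
  have finXN: "finite (X \<inter> N)" using finN by auto
  have "card P \<le> card (\<Union>x\<in>X \<inter> N. (\<lambda>u. {x, u}) ` (N - {x}))"
    by (rule card_mono) (use finXN finN sub in auto)
  also have "\<dots> \<le> (\<Sum>x\<in>X \<inter> N. card ((\<lambda>u. {x, u}) ` (N - {x})))"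
    by (rule card_UN_le[OF finXN])
  also have "\<dots> \<le> (\<Sum>x\<in>X \<inter> N. d - 1)"
  proof (rule sum_mono)
    fix x assume "x \<in> X \<inter> N"
    hence "card (N - {x}) = d - 1" using finN unfolding d_def by auto
    thus "card ((\<lambda>u. {x, u}) ` (N - {x})) \<le> d - 1" using card_image_le[of "N - {x}"] finN
      by (metis finite_Diff)
  qed
  also have "\<dots> = card (X \<inter> N) * (d - 1)" by simp
  also have "\<dots> \<le> k * (d - 1)"
  proof -
    have "card (X \<inter> N) \<le> card X" using finite_subset[OF XV mg(1)] by (simp add: card_mono)
    thus ?thesis using cX by (metis le_trans mult_le_mono1)
  qed
  finally have r: "rho V m v \<le> k * (d - 1)" using rhoP by simp
  have dk: "d > 7 * k" using assms(4) unfolding d_def N_def by simp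
  hence d1: "d \<ge> 1" using assms(2) by simp
  have "real (rho V m v) \<le> real k * (real d - 1)" using r d1
    by (metis of_nat_1 of_nat_diff of_nat_le_iff of_nat_mult)
  also have "\<dots> \<le> real d * (real d - 1) / 4"
  proof -
    have "4 * real k \<le> real d" using dk by simp
    moreover have "real d - 1 \<ge> 0" using d1 by simp
    ultimately have "4 * real k * (real d - 1) \<le> real d * (real d - 1)"
      by (simp add: mult_right_mono)
    thus ?thesis by simp
  qed
  finally show False using assms(5) unfolding d_def N_def by simp
qed

end
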